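(* Let $\mathcal{X}$ be finite, $\mathcal{F}\subseteq\mathcal{F}^+\subseteq(\mathcal{X}\to[-1,1])$, $\mathcal{Z}=\mathcal{X}\times[-1,1]$, decision space $\Pi=\mathcal{F}^+$, and consider the regression loss with a base loss $\mathrm{L}:[-1,1]^2\to[0,1]$ that is $1$-Lipschitz in its second argument. Then $N_{\mathsf{frac}}(\mathcal{M}_{\mathsf{agnostic}};\Delta)\le N_{\mathsf{frac}}(\mathcal{F},\mathcal{F}^+;\Delta)$ for all $\Delta>0$. If moreover $\mathrm{L}(y,y')=|y-y'|$ is the absolute loss, then for all $\Delta>0$, $$N_{\mathsf{frac}}(\mathcal{M}_{\mathsf{agnostic}};\Delta)=N_{\mathsf{frac}}(\mathcal{M}_{\mathcal{F},\mathsf{realizable}};\Delta)=N_{\mathsf{frac}}(\mathcal{F},\mathcal{F}^+;\Delta).$$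
   Context: For $M\in\Delta(\mathcal{Z})$ and $f\in\mathcal{F}^+$, the regression loss is $L(M,f)=\mathbb{E}_{(x,y)\sim M}\mathrm{L}(y,f(x))-\min_{f^\star\in\mathcal{F}}\mathbb{E}_{(x,y)\sim M}\mathrm{L}(y,f^\star(x))$ (the minimum is assumed attained). $\mathcal{M}_{\mathsf{agnostic}}=\Delta(\mathcal{Z})$; $\mathcal{M}_{\mathcal{F},\mathsf{realizable}}$ is the set of $M\in\Delta(\mathcal{Z})$ for which there is $f_M\in\mathcal{F}$ with $y=f_M(x)$ almost surely under $M$. For a model class $\mathcal{M}$, $N_{\mathsf{frac}}(\mathcal{M};\Delta)=\inf_{p\in\Delta(\Pi)}\sup_{M\in\mathcal{M}}\frac1{p(\{\pi:L(M,\pi)\le\Delta\})}$, and $N_{\mathsf{frac}}(\mathcal{F},\mathcal{F}^+;\Delta)=\inf_{p\in\Delta(\mathcal{F}^+)}\sup_{\mu\in\Delta(\mathcal{X}),f^\star\in\mathcal{F}}\frac1{p(\{f:\mathbb{E}_{x\sim\mu}|f(x)-f^\star(x)|\le\Delta\})}$. *)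

theory Defs
  imports "HOL-Probability.Probability"
begin

definition Zspace :: "('x \<times> real) measure" where
  "Zspace = count_space UNIV \<Otimes>\<^sub>M restrict_space borel {-1..1::real}"

definition models_agnostic :: "('x \<times> real) measure set" where
  "models_agnostic = {M. prob_space M \<and> sets M = sets Zspace}"

definition models_realizable :: "('x \<Rightarrow> real) set \<Rightarrow> ('x \<times> real) measure set" where
  "models_realizable F = {M \<in> models_agnostic. \<exists>fM\<in>F. AE z in M. snd z = fM (fst z)}"

definition risk :: "(real \<Rightarrow> real \<Rightarrow> real) \<Rightarrow> ('x \<times> real) measure \<Rightarrow> ('x \<Rightarrow> real) \<Rightarrow> real" where
  "risk L M f = (\<integral>z. L (snd z) (f (fst z)) \<partial>M)"

text \<open>Regression loss L(M,f) = risk(M,f) - min over F of risk (the min is assumed attained).\<close>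
definition regloss :: "(real \<Rightarrow> real \<Rightarrow> real) \<Rightarrow> ('x \<Rightarrow> real) set \<Rightarrow> ('x \<times> real) measure \<Rightarrow> ('x \<Rightarrow> real) \<Rightarrow> real" where
  "regloss L F M f = risk L M f - (INF g\<in>F. risk L M g)"

definition min_attained :: "(real \<Rightarrow> real \<Rightarrow> real) \<Rightarrow> ('x \<Rightarrow> real) set \<Rightarrow> bool" where
  "min_attained L F = (\<forall>M\<in>models_agnostic. \<exists>g\<in>F. \<forall>h\<in>F. risk L M g \<le> risk L M h)"

definition decision_dists :: "('x \<Rightarrow> real) set \<Rightarrow> ('x \<Rightarrow> real) measure set" where
  "decision_dists Fp = {p. prob_space p \<and> sets p = sets (restrict_space (Pi\<^sub>M UNIV (\<lambda>_. borel)) Fp)}"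

definition Nfrac_models :: "(real \<Rightarrow> real \<Rightarrow> real) \<Rightarrow> ('x \<Rightarrow> real) set \<Rightarrow> ('x \<Rightarrow> real) set
    \<Rightarrow> ('x \<times> real) measure set \<Rightarrow> real \<Rightarrow> ennreal" where
  "Nfrac_models L F Fp Ms \<Delta> =
     (INF p\<in>decision_dists Fp. SUP M\<in>Ms. 1 / emeasure p {\<pi>\<in>Fp. regloss L F M \<pi> \<le> \<Delta>})"

definition Nfrac_class :: "('x \<Rightarrow> real) set \<Rightarrow> ('x \<Rightarrow> real) set \<Rightarrow> real \<Rightarrow> ennreal" where
  "Nfrac_class F Fp \<Delta> =
     (INF p\<in>decision_dists Fp. SUP (\<mu>, fs)\<in>(UNIV :: 'x pmf set) \<times> F.
        1 / emeasure p {f\<in>Fp. measure_pmf.expectation \<mu> (\<lambda>x. \<bar>f x - fs x\<bar>) \<le> \<Delta>})"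

end

theory Submission
  imports Defs
begin

lemma L_comp_meas:
  fixes L :: "real \<Rightarrow> real \<Rightarrow> real"
  assumes Lm: "(\<lambda>z. L (fst z) (snd z)) \<in> borel_measurable (restrict_space borel ({-1..1} \<times> {-1..1}))"
    and a: "a \<in> borel_measurable N" and b: "b \<in> borel_measurable N"
    and r: "\<And>q. q \<in> space N \<Longrightarrow> a q \<in> {-1..1} \<and> b q \<in> {-1..1}"
  shows "(\<lambda>q. L (a q) (b q)) \<in> borel_measurable N"
proof -
  have "(\<lambda>q. (a q, b q)) \<in> measurable N (borel \<Otimes>\<^sub>M borel)"
    using a b by measurable
  then have "(\<lambda>q. (a q, b q)) \<in> measurable N borel" by (simp add: borel_prod)
  then have "(\<lambda>q. (a q, b q)) \<in> measurable N (restrict_space borel ({-1..1} \<times> {-1..1}))"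
    using r by (intro measurable_restrict_space2) auto
  from measurable_compose[OF this Lm] show ?thesis by simp
qed

lemma space_Zspace: "space Zspace = UNIV \<times> {-1..1::real}"
  unfolding Zspace_def by (simp add: space_pair_measure)

lemma space_agn: "M \<in> models_agnostic \<Longrightarrow> space M = UNIV \<times> {-1..1::real}"
  unfolding models_agnostic_def using sets_eq_imp_space_eq space_Zspace by (metis (mono_tags, lifting) mem_Collect_eq)

lemma fst_meas: "fst \<in> measurable Zspace (count_space UNIV)"
  unfolding Zspace_def by simp

lemma snd_meas: "snd \<in> borel_measurable Zspace"
proof -
  have "snd \<in> measurable Zspace (restrict_space borel {-1..1::real})"
    unfolding Zspace_def by simp
  then show ?thesis using measurable_restrict_space2_iff by blast
qed

lemma comp_fst_meas: "(\<lambda>z. f (fst z)) \<in> borel_measurable Zspace"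
  using measurable_compose[OF fst_meas, of f borel] by simp

lemma risk_meas:
  fixes L :: "real \<Rightarrow> real \<Rightarrow> real"
  assumes Lm: "(\<lambda>z. L (fst z) (snd z)) \<in> borel_measurable (restrict_space borel ({-1..1} \<times> {-1..1}))"
    and f: "\<forall>x. f x \<in> {-1..1}" and M: "M \<in> models_agnostic"
  shows "(\<lambda>z. L (snd z) (f (fst z))) \<in> borel_measurable M"
proof -
  have "(\<lambda>z. L (snd z) (f (fst z))) \<in> borel_measurable Zspace"
    by (rule L_comp_meas[OF Lm snd_meas comp_fst_meas]) (use f in \<open>auto simp: space_Zspace\<close>)
  moreover have "sets M = sets Zspace" using M unfolding models_agnostic_def by auto
  ultimately show ?thesis using measurable_cong_sets by blast
qed

lemma risk_int:
  fixes L :: "real \<Rightarrow> real \<Rightarrow> real"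
  assumes Lm: "(\<lambda>z. L (fst z) (snd z)) \<in> borel_measurable (restrict_space borel ({-1..1} \<times> {-1..1}))"
    and Lb: "\<forall>y\<in>{-1..1}. \<forall>y'\<in>{-1..1}. \<bar>L y y'\<bar> \<le> B"
    and f: "\<forall>x. f x \<in> {-1..1}" and M: "M \<in> models_agnostic"
  shows "integrable M (\<lambda>z. L (snd z) (f (fst z)))"
proof -
  interpret prob_space M using M unfolding models_agnostic_def by auto
  show ?thesis
  proof (rule integrable_const_bound[where B=B])
    show "AE x in M. norm (L (snd x) (f (fst x))) \<le> B"
      using Lb f by (intro AE_I2) (auto simp: space_agn[OF M])
  qed (rule risk_meas[OF Lm f M])
qed

definition clamp :: "real \<Rightarrow> real" where "clamp t = max (-1) (min 1 t)"

lemma clamp_range: "clamp t \<in> {-1..1}" unfolding clamp_def by auto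
lemma clamp_id: "t \<in> {-1..1} \<Longrightarrow> clamp t = t" unfolding clamp_def by auto
lemma clamp_meas[measurable]: "clamp \<in> borel_measurable borel" unfolding clamp_def by measurable

lemma eval_meas:
  "(\<lambda>q::('x::finite \<Rightarrow> real) \<times> ('x \<times> real). fst q (fst (snd q))) \<in> borel_measurable (Pi\<^sub>M UNIV (\<lambda>_. borel) \<Otimes>\<^sub>M Zspace)"
proof -
  let ?N = "Pi\<^sub>M UNIV (\<lambda>_. borel) \<Otimes>\<^sub>M Zspace :: (('x \<Rightarrow> real) \<times> ('x \<times> real)) measure"
  have e: "(\<lambda>q::('x::finite \<Rightarrow> real) \<times> ('x \<times> real). fst q (fst (snd q))) = (\<lambda>q. \<Sum>x\<in>UNIV. indicator {q. fst (snd q) = x} q * fst q x)"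
  proof
    fix q :: "('x \<Rightarrow> real) \<times> ('x \<times> real)"
    have "(\<Sum>x\<in>UNIV. indicator {q. fst (snd q) = x} q * fst q x) = (\<Sum>x\<in>UNIV. if fst (snd q) = x then fst q x else 0)"
      by (intro sum.cong) (auto simp: indicator_def)
    also have "\<dots> = fst q (fst (snd q))" by (subst sum.delta') auto
    finally show "fst q (fst (snd q)) = (\<Sum>x\<in>UNIV. indicator {q. fst (snd q) = x} q * fst q x)" by simp
  qed
  have m1: "(\<lambda>q. fst (snd q)) \<in> measurable ?N (count_space UNIV)"
    using measurable_compose[OF measurable_snd fst_meas] by blast
  have "{q. fst (snd q) = x} \<inter> space ?N \<in> sets ?N" for x :: 'x
    using measurable_sets[OF m1, of "{x}"] by (simp add: vimage_def Int_def)
  then have ind: "(indicator {q. fst (snd q) = x} :: _ \<Rightarrow> real) \<in> borel_measurable ?N" for x :: 'x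
    by (rule borel_measurable_indicator_iff[THEN iffD2])
  then show ?thesis unfolding e
  proof (intro borel_measurable_sum borel_measurable_times)
    fix x :: 'x
    show "(indicator {q. fst (snd q) = x} :: _ \<Rightarrow> real) \<in> borel_measurable ?N" by (rule ind)
    have "(\<lambda>\<pi>::'x\<Rightarrow>real. \<pi> x) \<in> borel_measurable (Pi\<^sub>M UNIV (\<lambda>_. borel))"
      by (rule measurable_component_singleton) simp
    from measurable_compose[OF measurable_fst this]
    show "(\<lambda>q. fst q x) \<in> borel_measurable ?N" by blast
  qed
qed

lemma G_meas:
  fixes L :: "real \<Rightarrow> real \<Rightarrow> real" and M :: "('x::finite \<times> real) measure"
  assumes Lm: "(\<lambda>z. L (fst z) (snd z)) \<in> borel_measurable (restrict_space borel ({-1..1} \<times> {-1..1}))"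
    and M: "M \<in> models_agnostic"
  shows "(\<lambda>\<pi>. \<integral>z. L (snd z) (clamp (\<pi> (fst z))) \<partial>M) \<in> borel_measurable (Pi\<^sub>M UNIV (\<lambda>_. borel))"
proof -
  let ?P = "Pi\<^sub>M UNIV (\<lambda>_. borel) :: ('x \<Rightarrow> real) measure"
  let ?N = "?P \<Otimes>\<^sub>M Zspace :: (('x \<Rightarrow> real) \<times> ('x \<times> real)) measure"
  have a: "(\<lambda>q. snd (snd q)) \<in> borel_measurable ?N"
    using measurable_compose[OF measurable_snd snd_meas] by blast
  have b: "(\<lambda>q. clamp (fst q (fst (snd q)))) \<in> borel_measurable ?N"
    using measurable_compose[OF eval_meas clamp_meas] by simp
  have H: "(\<lambda>q. L (snd (snd q)) (clamp (fst q (fst (snd q))))) \<in> borel_measurable ?N"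
    by (rule L_comp_meas[OF Lm a b]) (auto simp: space_pair_measure space_Zspace clamp_def)
  have sM: "sets M = sets Zspace" using M unfolding models_agnostic_def by auto
  have "sets (?P \<Otimes>\<^sub>M M) = sets ?N"
    by (rule sets_pair_measure_cong) (auto simp: sM)
  note eqs = measurable_cong_sets[OF this refl, where N=borel]
  have H0: "(\<lambda>q. L (snd (snd q)) (clamp (fst q (fst (snd q))))) \<in> borel_measurable (?P \<Otimes>\<^sub>M M)"
    unfolding eqs by (rule H)
  have H': "(\<lambda>(\<pi>, z). L (snd z) (clamp (\<pi> (fst z)))) \<in> borel_measurable (?P \<Otimes>\<^sub>M M)"
    using H0 by (simp add: case_prod_beta)
  interpret prob_space M using M unfolding models_agnostic_def by auto
  show ?thesis
    by (rule borel_measurable_lebesgue_integral[where f="\<lambda>\<pi> z. L (snd z) (clamp (\<pi> (fst z)))"]) (use H' in simp)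
qed

lemma inv_anti: "(b::ennreal) \<le> a \<Longrightarrow> 1/a \<le> 1/b"
proof (cases "b = 0")
  case False
  assume ba: "b \<le> a"
  show ?thesis
  proof (cases a rule: ennreal_cases)
    case (real r)
    then obtain s where s: "b = ennreal s" "0 \<le> s" using ba by (cases b rule: ennreal_cases) (auto simp: top_unique)
    with False have "s > 0" by (auto simp: order_le_less)
    moreover have "s \<le> r" using ba real s by (auto simp: ennreal_le_iff2)
    ultimately have "1 / ennreal r \<le> 1 / ennreal s"
      using divide_ennreal[of 1 r] divide_ennreal[of 1 s]
      by (simp add: ennreal_leI frac_le del: ennreal_1 flip: ennreal_1)
    then show ?thesis using real s by simp
  qed simp
qed (simp add: divide_ennreal_def)

lemma space_P: "space (Pi\<^sub>M UNIV (\<lambda>_. borel) :: ('x \<Rightarrow> real) measure) = UNIV"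
  by (simp add: space_PiM)

lemma R_sets:
  fixes L :: "real \<Rightarrow> real \<Rightarrow> real" and M :: "('x::finite \<times> real) measure"
  assumes Fp: "Fp \<subseteq> {f. \<forall>x. f x \<in> {-1..1}}"
    and Lm: "(\<lambda>z. L (fst z) (snd z)) \<in> borel_measurable (restrict_space borel ({-1..1} \<times> {-1..1}))"
    and M: "M \<in> models_agnostic" and p: "p \<in> decision_dists Fp"
  shows "{\<pi>\<in>Fp. regloss L F M \<pi> \<le> \<Delta>} \<in> sets p"
proof -
  let ?P = "Pi\<^sub>M UNIV (\<lambda>_. borel) :: ('x \<Rightarrow> real) measure"
  define G where "G = (\<lambda>\<pi>. \<integral>z. L (snd z) (clamp (\<pi> (fst z))) \<partial>M)"
  define c where "c = (INF g\<in>F. risk L M g)"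
  have Gm: "G \<in> borel_measurable ?P" unfolding G_def by (rule G_meas[OF Lm M])
  have T: "G -` {..c+\<Delta>} \<inter> space ?P \<in> sets ?P" by (rule measurable_sets[OF Gm]) simp
  have GR: "G \<pi> = risk L M \<pi>" if "\<pi> \<in> Fp" for \<pi>
    unfolding G_def risk_def using that Fp by (intro Bochner_Integration.integral_cong refl) (auto simp: clamp_id)
  have "{\<pi>\<in>Fp. regloss L F M \<pi> \<le> \<Delta>} = Fp \<inter> (G -` {..c+\<Delta>} \<inter> space ?P)"
    using GR by (auto simp: regloss_def c_def space_P)
  also have "\<dots> \<in> sets (restrict_space ?P Fp)"
    unfolding sets_restrict_space using T by blast
  finally show ?thesis using p unfolding decision_dists_def by auto
qed

lemma marginal_pmf:
  assumes M: "M \<in> models_agnostic"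
  shows "\<exists>\<mu>::'x::finite pmf. measure_pmf \<mu> = distr M (count_space UNIV) fst"
proof -
  interpret prob_space M using M unfolding models_agnostic_def by auto
  have sM: "sets M = sets Zspace" using M unfolding models_agnostic_def by auto
  have fm: "fst \<in> measurable M (count_space UNIV)"
    using fst_meas measurable_cong_sets[OF sM refl] by blast
  let ?D = "distr M (count_space UNIV) fst :: 'x measure"
  have ps: "prob_space ?D" by (rule prob_space_distr[OF fm])
  have sD: "sets ?D = UNIV" by simp
  interpret D: prob_space ?D by (rule ps)
  have "AE x in ?D. measure ?D {x} \<noteq> 0"
    by (subst D.AE_support_countable[OF sD]) (auto intro!: exI[of _ UNIV])
  then have "?D \<in> {M :: 'x measure. prob_space M \<and> sets M = UNIV \<and> (AE x in M. measure M {x} \<noteq> 0)}"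
    using ps sD by blast
  then show ?thesis using Abs_pmf_inverse by blast
qed

lemma regloss_le:
  fixes L :: "real \<Rightarrow> real \<Rightarrow> real" and M :: "('x::finite \<times> real) measure"
  assumes Lm: "(\<lambda>z. L (fst z) (snd z)) \<in> borel_measurable (restrict_space borel ({-1..1} \<times> {-1..1}))"
    and Lb: "\<forall>y\<in>{-1..1}. \<forall>y'\<in>{-1..1}. \<bar>L y y'\<bar> \<le> B"
    and Lip: "\<forall>y\<in>{-1..1}. \<forall>a\<in>{-1..1}. \<forall>b\<in>{-1..1}. \<bar>L y a - L y b\<bar> \<le> \<bar>a - b\<bar>"
    and M: "M \<in> models_agnostic"
    and g: "g \<in> F" "\<forall>h\<in>F. risk L M g \<le> risk L M h" "\<forall>x. g x \<in> {-1..1}"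
    and f: "\<forall>x. f x \<in> {-1..1}"
  shows "regloss L F M f \<le> (\<integral>z. \<bar>f (fst z) - g (fst z)\<bar> \<partial>M)"
proof -
  interpret prob_space M using M unfolding models_agnostic_def by auto
  have sM: "sets M = sets Zspace" using M unfolding models_agnostic_def by auto
  have inf: "(INF h\<in>F. risk L M h) = risk L M g"
  proof (rule antisym)
    show "(INF h\<in>F. risk L M h) \<le> risk L M g"
      by (rule cINF_lower[OF _ g(1)]) (use g(2) in \<open>auto intro!: bdd_belowI[of _ "risk L M g"]\<close>)
    show "risk L M g \<le> (INF h\<in>F. risk L M h)"
      by (rule cINF_greatest) (use g in auto)
  qed
  have i1: "integrable M (\<lambda>z. L (snd z) (f (fst z)))" by (rule risk_int[OF Lm Lb f M])
  have i2: "integrable M (\<lambda>z. L (snd z) (g (fst z)))" by (rule risk_int[OF Lm Lb g(3) M])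
  have m3: "(\<lambda>z. \<bar>f (fst z) - g (fst z)\<bar>) \<in> borel_measurable M"
    using comp_fst_meas[of "\<lambda>x. \<bar>f x - g x\<bar>"] measurable_cong_sets[OF sM refl] by blast
  have i3: "integrable M (\<lambda>z. \<bar>f (fst z) - g (fst z)\<bar>)"
  proof (rule integrable_const_bound[where B=2])
    show "AE x in M. norm \<bar>f (fst x) - g (fst x)\<bar> \<le> 2"
    proof (intro AE_I2)
      fix z
      have "f (fst z) \<in> {-1..1}" "g (fst z) \<in> {-1..1}" using f g(3) by auto
      then show "norm \<bar>f (fst z) - g (fst z)\<bar> \<le> 2" by auto
    qed
  qed (rule m3)
  have "regloss L F M f = (\<integral>z. L (snd z) (f (fst z)) - L (snd z) (g (fst z)) \<partial>M)"
    unfolding regloss_def inf risk_def by (rule Bochner_Integration.integral_diff[OF i1 i2, symmetric])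
  also have "\<dots> \<le> (\<integral>z. \<bar>f (fst z) - g (fst z)\<bar> \<partial>M)"
  proof (rule integral_mono[OF Bochner_Integration.integrable_diff[OF i1 i2] i3])
    fix z assume "z \<in> space M"
    then have "snd z \<in> {-1..1}" using space_agn[OF M] by auto
    then show "L (snd z) (f (fst z)) - L (snd z) (g (fst z)) \<le> \<bar>f (fst z) - g (fst z)\<bar>"
    proof -
      have "\<bar>L (snd z) (f (fst z)) - L (snd z) (g (fst z))\<bar> \<le> \<bar>f (fst z) - g (fst z)\<bar>"
        using Lip \<open>snd z \<in> {-1..1}\<close> f g(3) by blast
      then show ?thesis by linarith
    qed
  qed
  finally show ?thesis .
qed

lemma part1:
  fixes F Fp :: "('x::finite \<Rightarrow> real) set"
    and L :: "real \<Rightarrow> real \<Rightarrow> real"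
  assumes Fp: "Fp \<subseteq> {f. \<forall>x. f x \<in> {-1..1}}"
    and FFp: "F \<subseteq> Fp"
    and Lb: "\<forall>y\<in>{-1..1}. \<forall>y'\<in>{-1..1}. \<bar>L y y'\<bar> \<le> B"
    and Lip: "\<forall>y\<in>{-1..1}. \<forall>a\<in>{-1..1}. \<forall>b\<in>{-1..1}. \<bar>L y a - L y b\<bar> \<le> \<bar>a - b\<bar>"
    and Lm: "(\<lambda>z. L (fst z) (snd z)) \<in> borel_measurable (restrict_space borel ({-1..1} \<times> {-1..1}))"
    and ma: "min_attained L F"
  shows "Nfrac_models L F Fp models_agnostic \<Delta> \<le> Nfrac_class F Fp \<Delta>"
  unfolding Nfrac_models_def Nfrac_class_def
proof (rule INF_mono)
  fix p assume p: "p \<in> decision_dists Fp"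
  show "\<exists>p'\<in>decision_dists Fp. (SUP M\<in>models_agnostic. 1 / emeasure p' {\<pi> \<in> Fp. regloss L F M \<pi> \<le> \<Delta>})
      \<le> (SUP (\<mu>, fs)\<in>(UNIV :: 'x pmf set) \<times> F. 1 / emeasure p {f \<in> Fp. measure_pmf.expectation \<mu> (\<lambda>x. \<bar>f x - fs x\<bar>) \<le> \<Delta>})"
  proof (intro bexI[OF _ p] SUP_least)
    fix M :: "('x \<times> real) measure" assume M: "M \<in> models_agnostic"
    obtain g where g: "g \<in> F" "\<forall>h\<in>F. risk L M g \<le> risk L M h"
      using ma M unfolding min_attained_def by blast
    have g3: "\<forall>x. g x \<in> {-1..1}" using g(1) FFp Fp by auto
    obtain \<mu> :: "'x pmf" where mu: "measure_pmf \<mu> = distr M (count_space UNIV) fst"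
      using marginal_pmf[OF M] by blast
    have sM: "sets M = sets Zspace" using M unfolding models_agnostic_def by auto
    have fm: "fst \<in> measurable M (count_space UNIV)"
      using fst_meas measurable_cong_sets[OF sM refl] by blast
    have E: "measure_pmf.expectation \<mu> (\<lambda>x. \<bar>f x - g x\<bar>) = (\<integral>z. \<bar>f (fst z) - g (fst z)\<bar> \<partial>M)" for f
      unfolding mu by (rule integral_distr[OF fm]) simp
    have sub: "{f \<in> Fp. measure_pmf.expectation \<mu> (\<lambda>x. \<bar>f x - g x\<bar>) \<le> \<Delta>} \<subseteq> {\<pi> \<in> Fp. regloss L F M \<pi> \<le> \<Delta>}"
    proof clarify
      fix f assume f: "f \<in> Fp" "measure_pmf.expectation \<mu> (\<lambda>x. \<bar>f x - g x\<bar>) \<le> \<Delta>"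
      have "regloss L F M f \<le> (\<integral>z. \<bar>f (fst z) - g (fst z)\<bar> \<partial>M)"
        by (rule regloss_le[OF Lm Lb Lip M g g3]) (use f Fp in auto)
      then show "regloss L F M f \<le> \<Delta>" using f(2) E by simp
    qed
    have "emeasure p {f \<in> Fp. measure_pmf.expectation \<mu> (\<lambda>x. \<bar>f x - g x\<bar>) \<le> \<Delta>} \<le> emeasure p {\<pi> \<in> Fp. regloss L F M \<pi> \<le> \<Delta>}"
      by (rule emeasure_mono[OF sub R_sets[OF Fp Lm M p]])
    then have "1 / emeasure p {\<pi> \<in> Fp. regloss L F M \<pi> \<le> \<Delta>} \<le> 1 / emeasure p {f \<in> Fp. measure_pmf.expectation \<mu> (\<lambda>x. \<bar>f x - g x\<bar>) \<le> \<Delta>}"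
      by (rule inv_anti)
    also have "\<dots> \<le> (SUP (\<mu>, fs)\<in>(UNIV :: 'x pmf set) \<times> F. 1 / emeasure p {f \<in> Fp. measure_pmf.expectation \<mu> (\<lambda>x. \<bar>f x - fs x\<bar>) \<le> \<Delta>})"
      by (rule SUP_upper2[where i="(\<mu>, g)"]) (use g in auto)
    finally show "1 / emeasure p {\<pi> \<in> Fp. regloss L F M \<pi> \<le> \<Delta>} \<le> (SUP (\<mu>, fs)\<in>(UNIV :: 'x pmf set) \<times> F. 1 / emeasure p {f \<in> Fp. measure_pmf.expectation \<mu> (\<lambda>x. \<bar>f x - fs x\<bar>) \<le> \<Delta>})" .
  qed
qed

lemma part2:
  fixes F Fp :: "('x::finite \<Rightarrow> real) set"
  assumes Fp: "Fp \<subseteq> {f. \<forall>x. f x \<in> {-1..1}}"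
    and FFp: "F \<subseteq> Fp"
  shows "Nfrac_class F Fp \<Delta> \<le> Nfrac_models (\<lambda>y y'. \<bar>y - y'\<bar>) F Fp (models_realizable F) \<Delta>"
  unfolding Nfrac_models_def Nfrac_class_def
proof (rule INF_mono)
  fix p assume p: "p \<in> decision_dists Fp"
  show "\<exists>p'\<in>decision_dists Fp. (SUP (\<mu>, fs)\<in>(UNIV :: 'x pmf set) \<times> F. 1 / emeasure p' {f \<in> Fp. measure_pmf.expectation \<mu> (\<lambda>x. \<bar>f x - fs x\<bar>) \<le> \<Delta>})
     \<le> (SUP M\<in>models_realizable F. 1 / emeasure p {\<pi> \<in> Fp. regloss (\<lambda>y y'. \<bar>y - y'\<bar>) F M \<pi> \<le> \<Delta>})"
  proof (intro bexI[OF _ p] SUP_least, clarify)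
    fix \<mu> :: "'x pmf" and fs assume fs: "fs \<in> F"
    have fs1: "\<forall>x. fs x \<in> {-1..1}" using fs FFp Fp by auto
    define h where "h = (\<lambda>x. (x, fs x))"
    have hm: "h \<in> measurable (measure_pmf \<mu>) Zspace"
    proof -
      have "h \<in> measurable (count_space UNIV) Zspace"
        using fs1 by (auto simp: measurable_count_space_eq1 h_def space_Zspace)
      then show ?thesis using measurable_cong_sets[of "measure_pmf \<mu>" "count_space UNIV" Zspace Zspace] by simp
    qed
    define M where "M = distr (measure_pmf \<mu>) Zspace h"
    have sM: "sets M = sets Zspace" unfolding M_def by simp
    have psM: "prob_space M" unfolding M_def by (rule measure_pmf.prob_space_distr[OF hm])
    have Magn: "M \<in> models_agnostic" unfolding models_agnostic_def using sM psM by auto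
    have dm: "(\<lambda>z. snd z - fs (fst z)) \<in> borel_measurable Zspace"
      using snd_meas comp_fst_meas[of fs] by (rule borel_measurable_diff)
    have "{z \<in> space Zspace. snd z - fs (fst z) \<in> {0}} \<in> sets Zspace"
      using measurable_sets[OF dm, of "{0}"] by (simp add: vimage_def Int_def conj_commute)
    then have Sm: "{z \<in> space Zspace. snd z = fs (fst z)} \<in> sets Zspace" by simp
    have "AE z in M. snd z = fs (fst z)"
      unfolding M_def by (subst AE_distr_iff[OF hm Sm]) (simp add: h_def)
    then have Mreal: "M \<in> models_realizable F" unfolding models_realizable_def using Magn fs by blast
    have risk: "risk (\<lambda>y y'. \<bar>y - y'\<bar>) M g = measure_pmf.expectation \<mu> (\<lambda>x. \<bar>fs x - g x\<bar>)" for g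
    proof -
      have "(\<lambda>z. \<bar>snd z - g (fst z)\<bar>) \<in> borel_measurable Zspace"
        using borel_measurable_abs[OF borel_measurable_diff[OF snd_meas comp_fst_meas[of g]]] .
      then show ?thesis unfolding risk_def M_def by (subst integral_distr[OF hm]) (auto simp: h_def)
    qed
    have inf: "(INF g\<in>F. risk (\<lambda>y y'. \<bar>y - y'\<bar>) M g) = 0"
    proof (rule antisym)
      show "(INF g\<in>F. risk (\<lambda>y y'. \<bar>y - y'\<bar>) M g) \<le> 0"
        by (rule cINF_lower2[OF _ fs]) (auto simp: risk intro!: bdd_belowI[of _ 0] Bochner_Integration.integral_nonneg)
      show "0 \<le> (INF g\<in>F. risk (\<lambda>y y'. \<bar>y - y'\<bar>) M g)"
        by (rule cINF_greatest) (use fs in \<open>auto simp: risk intro!: Bochner_Integration.integral_nonneg\<close>)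
    qed
    have eqset: "{\<pi> \<in> Fp. regloss (\<lambda>y y'. \<bar>y - y'\<bar>) F M \<pi> \<le> \<Delta>} = {f \<in> Fp. measure_pmf.expectation \<mu> (\<lambda>x. \<bar>f x - fs x\<bar>) \<le> \<Delta>}"
      unfolding regloss_def inf by (simp add: risk abs_minus_commute)
    show "1 / emeasure p {f \<in> Fp. measure_pmf.expectation \<mu> (\<lambda>x. \<bar>f x - fs x\<bar>) \<le> \<Delta>}
       \<le> (SUP M\<in>models_realizable F. 1 / emeasure p {\<pi> \<in> Fp. regloss (\<lambda>y y'. \<bar>y - y'\<bar>) F M \<pi> \<le> \<Delta>})"
      by (rule SUP_upper2[OF Mreal]) (simp add: eqset)
  qed
qed

theorem mainTheorem19:
  fixes F Fp :: "('x::finite \<Rightarrow> real) set"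
    and L :: "real \<Rightarrow> real \<Rightarrow> real"
  assumes "Fp \<subseteq> {f. \<forall>x. f x \<in> {-1..1}}"
    and "F \<subseteq> Fp"
    and "\<forall>y\<in>{-1..1}. \<forall>y'\<in>{-1..1}. L y y' \<in> {0..1}"
    and "\<forall>y\<in>{-1..1}. \<forall>a\<in>{-1..1}. \<forall>b\<in>{-1..1}. \<bar>L y a - L y b\<bar> \<le> \<bar>a - b\<bar>"
    and "(\<lambda>z. L (fst z) (snd z)) \<in> borel_measurable (restrict_space borel ({-1..1} \<times> {-1..1}))"
    and "min_attained L F"
  shows "(\<forall>\<Delta>>0. Nfrac_models L F Fp models_agnostic \<Delta> \<le> Nfrac_class F Fp \<Delta>)
    \<and> (min_attained (\<lambda>y y'. \<bar>y - y'\<bar>) F \<longrightarrow>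
        (\<forall>\<Delta>>0. Nfrac_models (\<lambda>y y'. \<bar>y - y'\<bar>) F Fp models_agnostic \<Delta>
                 = Nfrac_models (\<lambda>y y'. \<bar>y - y'\<bar>) F Fp (models_realizable F) \<Delta>
              \<and> Nfrac_models (\<lambda>y y'. \<bar>y - y'\<bar>) F Fp (models_realizable F) \<Delta>
                 = Nfrac_class F Fp \<Delta>))"
proof -
  have B1: "\<forall>y\<in>{-1..1}. \<forall>y'\<in>{-1..1}. \<bar>L y y'\<bar> \<le> 1" using assms(3) by auto
  have P1: "\<forall>\<Delta>>0. Nfrac_models L F Fp models_agnostic \<Delta> \<le> Nfrac_class F Fp \<Delta>"
    using part1[OF assms(1,2) B1 assms(4,5,6)] by blast
  have B2: "\<forall>y\<in>{-1..1::real}. \<forall>y'\<in>{-1..1}. \<bar>\<bar>y - y'\<bar>\<bar> \<le> 2" by auto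
  have Lip2: "\<forall>y\<in>{-1..1::real}. \<forall>a\<in>{-1..1}. \<forall>b\<in>{-1..1}. \<bar>\<bar>y - a\<bar> - \<bar>y - b\<bar>\<bar> \<le> \<bar>a - b\<bar>" by auto
  have Lm2: "(\<lambda>z. (\<lambda>y y'. \<bar>y - y'\<bar>) (fst z) (snd z)) \<in> borel_measurable (restrict_space borel ({-1..1::real} \<times> {-1..1}))"
    by (intro measurable_restrict_space1 borel_measurable_continuous_onI continuous_intros)
  have mono: "Nfrac_models L' F Fp (models_realizable F) \<Delta> \<le> Nfrac_models L' F Fp models_agnostic \<Delta>" for L' \<Delta>
    unfolding Nfrac_models_def
    by (intro INF_mono bexI SUP_subset_mono order_refl) (auto simp: models_realizable_def)
  show ?thesis
  proof (rule conjI[OF P1], intro impI allI)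
    fix \<Delta> :: real assume ma: "min_attained (\<lambda>y y'. \<bar>y - y'\<bar>) F" and "\<Delta> > 0"
    have a: "Nfrac_models (\<lambda>y y'. \<bar>y - y'\<bar>) F Fp models_agnostic \<Delta> \<le> Nfrac_class F Fp \<Delta>"
      by (rule part1[OF assms(1,2) B2 Lip2 Lm2 ma])
    have b: "Nfrac_class F Fp \<Delta> \<le> Nfrac_models (\<lambda>y y'. \<bar>y - y'\<bar>) F Fp (models_realizable F) \<Delta>"
      by (rule part2[OF assms(1,2)])
    have c: "Nfrac_models (\<lambda>y y'. \<bar>y - y'\<bar>) F Fp (models_realizable F) \<Delta> \<le> Nfrac_models (\<lambda>y y'. \<bar>y - y'\<bar>) F Fp models_agnostic \<Delta>"
      by (rule mono)
    show "Nfrac_models (\<lambda>y y'. \<bar>y - y'\<bar>) F Fp models_agnostic \<Delta> = Nfrac_models (\<lambda>y y'. \<bar>y - y'\<bar>) F Fp (models_realizable F) \<Delta>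
      \<and> Nfrac_models (\<lambda>y y'. \<bar>y - y'\<bar>) F Fp (models_realizable F) \<Delta> = Nfrac_class F Fp \<Delta>"
      using a b c by (meson antisym order_trans)
  qed
qed

end
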